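(* Let $k$ be a field and $r$ a positive integer. The free metabelian Lie algebra $F_r$ over $k$ is equationally Noetherian: for every $n\in\mathbb{N}$ and every system $S\subseteq F_r[x_1,\dots,x_n]$ there exists a finite subsystem $S_0\subseteq S$ with $V_{F_r}(S)=V_{F_r}(S_0)$.
   Context: $F_r[X]=F_r\ast F(X)$ is the free product of $F_r$ with the free Lie $k$-algebra on $X=\{x_1,\dots,x_n\}$ (the free $F_r$-algebra on $X$). For $S\subseteq F_r[X]$, $V_{F_r}(S)=\{p\in F_r^n: f(p)=0\ \forall f\in S\}$. *)

theory Defs
  imports Main
begin

text \<open>Formal Lie expressions over a field 'k: generators a_i (of F_r), variables x_j,
  zero, sum, scalar multiple and bracket.\<close>
datatype 'k lterm =
    Gen nat
  | Var nat
  | LZero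
  | LAdd "'k lterm" "'k lterm"
  | LSmul 'k "'k lterm"
  | LBr "'k lterm" "'k lterm"

fun gens :: "'k lterm \<Rightarrow> nat set" where
  "gens (Gen i) = {i}"
| "gens (Var j) = {}"
| "gens LZero = {}"
| "gens (LAdd a b) = gens a \<union> gens b"
| "gens (LSmul c a) = gens a"
| "gens (LBr a b) = gens a \<union> gens b"

fun vars :: "'k lterm \<Rightarrow> nat set" where
  "vars (Gen i) = {}"
| "vars (Var j) = {j}"
| "vars LZero = {}"
| "vars (LAdd a b) = vars a \<union> vars b"
| "vars (LSmul c a) = vars a"
| "vars (LBr a b) = vars a \<union> vars b"

fun subst :: "(nat \<Rightarrow> 'k lterm) \<Rightarrow> 'k lterm \<Rightarrow> 'k lterm" where
  "subst p (Gen i) = Gen i"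
| "subst p (Var j) = p j"
| "subst p LZero = LZero"
| "subst p (LAdd a b) = LAdd (subst p a) (subst p b)"
| "subst p (LSmul c a) = LSmul c (subst p a)"
| "subst p (LBr a b) = LBr (subst p a) (subst p b)"

inductive meq :: "'k::field lterm \<Rightarrow> 'k lterm \<Rightarrow> bool" where
  refl: "meq a a"
| sym: "meq a b \<Longrightarrow> meq b a"
| trans: "meq a b \<Longrightarrow> meq b c \<Longrightarrow> meq a c"
| cong_add: "meq a a' \<Longrightarrow> meq b b' \<Longrightarrow> meq (LAdd a b) (LAdd a' b')"
| cong_smul: "meq a a' \<Longrightarrow> meq (LSmul c a) (LSmul c a')"
| cong_br: "meq a a' \<Longrightarrow> meq b b' \<Longrightarrow> meq (LBr a b) (LBr a' b')"
| add_assoc: "meq (LAdd (LAdd a b) c) (LAdd a (LAdd b c))"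
| add_comm: "meq (LAdd a b) (LAdd b a)"
| add_zero: "meq (LAdd a LZero) a"
| add_neg: "meq (LAdd a (LSmul (-1) a)) LZero"
| smul_add: "meq (LSmul c (LAdd a b)) (LAdd (LSmul c a) (LSmul c b))"
| add_smul: "meq (LSmul (c + d) a) (LAdd (LSmul c a) (LSmul d a))"
| smul_smul: "meq (LSmul c (LSmul d a)) (LSmul (c * d) a)"
| smul_one: "meq (LSmul 1 a) a"
| br_add_left: "meq (LBr (LAdd a b) c) (LAdd (LBr a c) (LBr b c))"
| br_add_right: "meq (LBr a (LAdd b c)) (LAdd (LBr a b) (LBr a c))"
| br_smul_left: "meq (LBr (LSmul c a) b) (LSmul c (LBr a b))"
| br_smul_right: "meq (LBr a (LSmul c b)) (LSmul c (LBr a b))"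
| br_alt: "meq (LBr a a) LZero"
| jacobi: "meq (LAdd (LAdd (LBr a (LBr b c)) (LBr b (LBr c a))) (LBr c (LBr a b))) LZero"
| metabelian: "meq (LBr (LBr a b) (LBr c d)) LZero"

definition Fr_elem :: "nat \<Rightarrow> 'k lterm \<Rightarrow> bool" where
  "Fr_elem r t \<longleftrightarrow> vars t = {} \<and> gens t \<subseteq> {..<r}"

definition FrX_elem :: "nat \<Rightarrow> nat \<Rightarrow> 'k lterm \<Rightarrow> bool" where
  "FrX_elem r n t \<longleftrightarrow> vars t \<subseteq> {..<n} \<and> gens t \<subseteq> {..<r}"

text \<open>Points of F_r^n (tuples of representatives, padded by LZero) and the zero set V_{F_r}(S).\<close>
definition Vset :: "nat \<Rightarrow> nat \<Rightarrow> 'k::field lterm set \<Rightarrow> (nat \<Rightarrow> 'k lterm) set" where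
  "Vset r n S = {p. (\<forall>j<n. Fr_elem r (p j)) \<and> (\<forall>j\<ge>n. p j = LZero)
                   \<and> (\<forall>f\<in>S. meq (subst p f) LZero)}"

end

theory Submission
  imports Defs "HOL-Library.List_Lenlexorder" "HOL.Vector_Spaces" "HOL.Topological_Spaces"
begin

quotient_type (overloaded) 'k mla = "'k::field lterm" / meq
  by (rule equivpI) (auto simp: reflp_def symp_def transp_def intro: meq.intros)

instantiation mla :: (field) ab_group_add
begin
lift_definition zero_mla :: "'a mla" is LZero .
lift_definition plus_mla :: "'a mla \<Rightarrow> 'a mla \<Rightarrow> 'a mla" is LAdd by (rule meq.cong_add)
lift_definition uminus_mla :: "'a mla \<Rightarrow> 'a mla" is "LSmul (-1)" by (rule meq.cong_smul)
lift_definition minus_mla :: "'a mla \<Rightarrow> 'a mla \<Rightarrow> 'a mla" is "\<lambda>a b. LAdd a (LSmul (-1) b)"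
  by (intro meq.cong_add meq.cong_smul)
instance proof
  fix a b c :: "'a mla"
  show "a + b + c = a + (b + c)" by transfer (rule meq.add_assoc)
  show "a + b = b + a" by transfer (rule meq.add_comm)
  show "0 + a = a" by transfer (meson meq.add_comm meq.add_zero meq.trans)
  show "- a + a = 0" by transfer (meson meq.add_comm meq.add_neg meq.trans)
  show "a - b = a + - b" by transfer (rule meq.refl)
qed
end

lift_definition sc :: "'k::field \<Rightarrow> 'k mla \<Rightarrow> 'k mla" is LSmul by (rule meq.cong_smul)
lift_definition br :: "'k::field mla \<Rightarrow> 'k mla \<Rightarrow> 'k mla" is LBr by (rule meq.cong_br)

lemma meq_subst: "meq a b \<Longrightarrow> meq (subst p a) (subst p b)"
  by (induction rule: meq.induct) (auto intro: meq.intros)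

lift_definition ev :: "(nat \<Rightarrow> 'k::field lterm) \<Rightarrow> 'k mla \<Rightarrow> 'k mla" is subst
  by (rule meq_subst)

interpretation mla: vector_space sc
  apply unfold_locales
     apply (transfer, rule meq.smul_add)
    apply (transfer, rule meq.add_smul)
   apply (transfer, rule meq.smul_smul)
  apply (transfer, rule meq.smul_one)
  done

lemma br_add_left: "br (x + y) z = br x z + br y z" by transfer (rule meq.br_add_left)
lemma br_add_right: "br x (y + z) = br x y + br x z" by transfer (rule meq.br_add_right)
lemma br_sc_left: "br (sc c x) y = sc c (br x y)" by transfer (rule meq.br_smul_left)
lemma br_sc_right: "br x (sc c y) = sc c (br x y)" by transfer (rule meq.br_smul_right)
lemma br_alt: "br x x = 0" by transfer (rule meq.br_alt)
lemma jacobi: "br x (br y z) + br y (br z x) + br z (br x y) = 0" by transfer (rule meq.jacobi)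
lemma metab: "br (br a b) (br c d) = 0" by transfer (rule meq.metabelian)

lemma br_zero_left[simp]: "br 0 y = 0"
proof -
  have "br (0+0) y = br 0 y + br 0 y" by (rule br_add_left)
  then show ?thesis by simp
qed
lemma br_zero_right[simp]: "br y 0 = 0"
proof -
  have "br y (0+0) = br y 0 + br y 0" by (rule br_add_right)
  then show ?thesis by simp
qed
lemma br_anti: "br x y = - br y x"
proof -
  have "br (x+y) (x+y) = 0" by (rule br_alt)
  then have "br x x + br y x + (br x y + br y y) = 0" by (simp add: br_add_left br_add_right)
  then have "br x y + br y x = 0" by (simp add: br_alt add.commute)
  then show ?thesis by (simp add: eq_neg_iff_add_eq_0)
qed

lemma br_neg_right[simp]: "br x (- y) = - br x y"
proof -
  have "br x (-y + y) = br x (-y) + br x y" by (rule br_add_right)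
  then show ?thesis by (simp add: eq_neg_iff_add_eq_0)
qed
lemma br_neg_left[simp]: "br (- y) x = - br y x"
proof -
  have "br (-y + y) x = br (-y) x + br y x" by (rule br_add_left)
  then show ?thesis by (simp add: eq_neg_iff_add_eq_0)
qed

lemma br_sum_right: "br x (sum f A) = (\<Sum>a\<in>A. br x (f a))"
  by (induction A rule: infinite_finite_induct) (auto simp: br_add_right)
lemma br_sum_left: "br (sum f A) x = (\<Sum>a\<in>A. br (f a) x)"
  by (induction A rule: infinite_finite_induct) (auto simp: br_add_left)

lemma br_comm: "br x (br y (br u v)) = br y (br x (br u v))"
proof -
  have "br x (br y (br u v)) + br y (br (br u v) x) + br (br u v) (br x y) = 0" by (rule jacobi)
  then show ?thesis by (simp add: metab br_anti[of "br u v" x])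
qed

lemma ev_add[simp]: "ev p (x + y) = ev p x + ev p y" by transfer (simp add: meq.refl)
lemma ev_sc[simp]: "ev p (sc c x) = sc c (ev p x)" by transfer (simp add: meq.refl)
lemma ev_br[simp]: "ev p (br x y) = br (ev p x) (ev p y)" by transfer (simp add: meq.refl)
lemma ev_zero[simp]: "ev p 0 = 0" by transfer (simp add: meq.refl)


definition supp :: "('a \<Rightarrow> 'k::field) \<Rightarrow> 'a set" where "supp c = {d. c d \<noteq> 0}"
definition lead :: "('a::linorder \<Rightarrow> 'k::field) \<Rightarrow> 'a" where "lead c = Max (supp c)"
definition subsp :: "('a \<Rightarrow> 'k::field) set \<Rightarrow> bool" where
  "subsp P \<longleftrightarrow> (\<lambda>_. 0) \<in> P \<and> (\<forall>c\<in>P. \<forall>b\<in>P. \<forall>a. (\<lambda>x. c x + a * b x) \<in> P)"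
definition LT :: "('a::linorder \<Rightarrow> 'k::field) set \<Rightarrow> 'a set" where
  "LT P = lead ` {c\<in>P. c \<noteq> (\<lambda>_. 0)}"

lemma subspD: "subsp P \<Longrightarrow> c \<in> P \<Longrightarrow> b \<in> P \<Longrightarrow> (\<lambda>x. c x + a * b x) \<in> P"
  unfolding subsp_def by blast
lemma subsp0: "subsp P \<Longrightarrow> (\<lambda>_. 0) \<in> P"
  unfolding subsp_def by blast

lemma supp_ne: "c \<noteq> (\<lambda>_. 0) \<Longrightarrow> supp c \<noteq> {}"
  unfolding supp_def by auto

lemma lead_in: "finite (supp c) \<Longrightarrow> c \<noteq> (\<lambda>_. 0) \<Longrightarrow> lead c \<in> supp c"
  unfolding lead_def using supp_ne Max_in by blast

lemma lead_ge: "finite (supp c) \<Longrightarrow> d \<in> supp c \<Longrightarrow> d \<le> lead c"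
  unfolding lead_def by simp

lemma reduce:
  fixes P Q :: "('a::wellorder \<Rightarrow> 'k::field) set"
  assumes sP: "subsp P" and sQ: "subsp Q" and PQ: "P \<subseteq> Q"
    and fQ: "\<forall>c\<in>Q. finite (supp c)" and LTs: "LT Q \<subseteq> LT P"
  shows "Q \<subseteq> P"
proof -
  have main: "\<forall>c\<in>Q. c \<noteq> (\<lambda>_. 0) \<longrightarrow> lead c = d \<longrightarrow> c \<in> P" for d
  proof (induction d rule: less_induct)
    case (less d)
    show ?case
    proof (intro ballI impI)
      fix c assume cQ: "c \<in> Q" and c0: "c \<noteq> (\<lambda>_. 0)" and ld: "lead c = d"
      have "d \<in> LT Q" unfolding LT_def using cQ c0 ld by blast
      with LTs have "d \<in> LT P" by blast
      then obtain b where bP: "b \<in> P" and b0: "b \<noteq> (\<lambda>_. 0)" and lb: "lead b = d"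
        unfolding LT_def by blast
      have bQ: "b \<in> Q" using bP PQ by blast
      have fb: "finite (supp b)" using fQ bQ by blast
      have fc: "finite (supp c)" using fQ cQ by blast
      have bd: "b d \<noteq> 0" using lead_in[OF fb b0] lb unfolding supp_def by simp
      define a where "a = c d / b d"
      define c' where "c' = (\<lambda>x. c x + (- a) * b x)"
      have c'Q: "c' \<in> Q" unfolding c'_def by (rule subspD[OF sQ cQ bQ])
      have c_eq: "c = (\<lambda>x. c' x + a * b x)" unfolding c'_def by auto
      show "c \<in> P"
      proof (cases "c' = (\<lambda>_. 0)")
        case True
        have "(\<lambda>x. (\<lambda>_. 0) x + a * b x) \<in> P" by (rule subspD[OF sP subsp0[OF sP] bP])
        then show ?thesis using c_eq True by simp
      next
        case False
        have sub: "supp c' \<subseteq> supp c \<union> supp b" unfolding supp_def c'_def by auto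
        have fc': "finite (supp c')" using sub fb fc finite_subset by blast
        have c'd: "c' d = 0" unfolding c'_def a_def using bd by simp
        have lin: "lead c' \<in> supp c'" using lead_in[OF fc' False] .
        have "lead c' \<le> d"
        proof -
          have "lead c' \<in> supp c \<or> lead c' \<in> supp b" using lin sub by blast
          then show ?thesis
          proof
            assume "lead c' \<in> supp c" then show ?thesis using lead_ge[OF fc] ld by simp
          next
            assume "lead c' \<in> supp b" then show ?thesis using lead_ge[OF fb] lb by simp
          qed
        qed
        moreover have "lead c' \<noteq> d" using lin c'd unfolding supp_def by auto
        ultimately have "lead c' < d" by simp
        then have "c' \<in> P" using less.IH[of "lead c'"] c'Q False by blast
        then have "(\<lambda>x. c' x + a * b x) \<in> P" by (rule subspD[OF sP _ bP])
        then show ?thesis using c_eq by simp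
      qed
    qed
  qed
  show ?thesis
  proof
    fix c assume cQ: "c \<in> Q"
    show "c \<in> P"
    proof (cases "c = (\<lambda>_. 0)")
      case True then show ?thesis using subsp0[OF sP] by simp
    next
      case False then show ?thesis using main cQ by blast
    qed
  qed
qed

lemma nat_monosub:
  fixes h :: "nat \<Rightarrow> nat"
  shows "\<exists>\<sigma>::nat\<Rightarrow>nat. strict_mono \<sigma> \<and> (\<forall>a b. a \<le> b \<longrightarrow> h (\<sigma> a) \<le> h (\<sigma> b))"
proof -
  obtain \<sigma> :: "nat \<Rightarrow> nat" where sm: "strict_mono \<sigma>" and ms: "monoseq (\<lambda>n. h (\<sigma> n))"
    using seq_monosub by blast
  show ?thesis
  proof (cases "\<forall>m n. m \<le> n \<longrightarrow> h (\<sigma> m) \<le> h (\<sigma> n)")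
    case True then show ?thesis using sm by blast
  next
    case False
    then have dec: "\<forall>m n. m \<le> n \<longrightarrow> h (\<sigma> n) \<le> h (\<sigma> m)" using ms unfolding monoseq_def by blast
    define v where "v = (LEAST v. \<exists>k. h (\<sigma> k) = v)"
    have "\<exists>k. h (\<sigma> k) = v" unfolding v_def by (rule LeastI_ex) blast
    then obtain k0 where k0: "h (\<sigma> k0) = v" by blast
    have vle: "v \<le> h (\<sigma> k)" for k unfolding v_def by (rule Least_le) blast
    have const: "h (\<sigma> (k + k0)) = v" for k using dec[rule_format, of k0 "k+k0"] vle[of "k+k0"] k0
      by simp
    have "strict_mono (\<lambda>k. \<sigma> (k + k0))" using sm unfolding strict_mono_def by simp
    moreover have "\<forall>a b. a \<le> b \<longrightarrow> h (\<sigma> (a + k0)) \<le> h (\<sigma> (b + k0))" using const by simp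
    ultimately show ?thesis by blast
  qed
qed

lemma dickson:
  fixes x :: "nat \<Rightarrow> nat list"
  assumes "\<forall>k. length (x k) = L"
  shows "\<exists>\<sigma>::nat\<Rightarrow>nat. strict_mono \<sigma> \<and> (\<forall>a b. a \<le> b \<longrightarrow> list_all2 (\<le>) (x (\<sigma> a)) (x (\<sigma> b)))"
  using assms
proof (induction L arbitrary: x)
  case 0
  then have "\<forall>k. x k = []" by simp
  moreover have "strict_mono (id::nat\<Rightarrow>nat)" by (simp add: strict_mono_def)
  ultimately show ?case by auto
next
  case (Suc L)
  have ne: "x k = hd (x k) # tl (x k)" for k using Suc.prems
    by (metis Zero_not_Suc list.collapse list.size(3))
  have "\<forall>k. length (tl (x k)) = L" using Suc.prems by simp
  from Suc.IH[OF this] obtain \<sigma>1 :: "nat \<Rightarrow> nat" where s1: "strict_mono \<sigma>1"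
    and m1: "\<forall>a b. a \<le> b \<longrightarrow> list_all2 (\<le>) (tl (x (\<sigma>1 a))) (tl (x (\<sigma>1 b)))" by blast
  obtain \<sigma>2 :: "nat \<Rightarrow> nat" where s2: "strict_mono \<sigma>2"
    and m2: "\<forall>a b. a \<le> b \<longrightarrow> hd (x (\<sigma>1 (\<sigma>2 a))) \<le> hd (x (\<sigma>1 (\<sigma>2 b)))"
    using nat_monosub[of "\<lambda>k. hd (x (\<sigma>1 k))"] by blast
  have "strict_mono (\<sigma>1 \<circ> \<sigma>2)" using s1 s2 by (simp add: strict_mono_def)
  moreover have "\<forall>a b. a \<le> b \<longrightarrow> list_all2 (\<le>) (x ((\<sigma>1 \<circ> \<sigma>2) a)) (x ((\<sigma>1 \<circ> \<sigma>2) b))"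
  proof (intro allI impI)
    fix a b :: nat assume ab: "a \<le> b"
    have "\<sigma>2 a \<le> \<sigma>2 b" using s2 ab by (simp add: strict_mono_less_eq)
    then have t: "list_all2 (\<le>) (tl (x (\<sigma>1 (\<sigma>2 a)))) (tl (x (\<sigma>1 (\<sigma>2 b))))" using m1 by blast
    have h: "hd (x (\<sigma>1 (\<sigma>2 a))) \<le> hd (x (\<sigma>1 (\<sigma>2 b)))" using m2 ab by blast
    have "list_all2 (\<le>) (hd (x (\<sigma>1 (\<sigma>2 a))) # tl (x (\<sigma>1 (\<sigma>2 a))))
       (hd (x (\<sigma>1 (\<sigma>2 b))) # tl (x (\<sigma>1 (\<sigma>2 b))))" using t h by simp
    then show "list_all2 (\<le>) (x ((\<sigma>1 \<circ> \<sigma>2) a)) (x ((\<sigma>1 \<circ> \<sigma>2) b))"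
      by (simp only: o_def ne[symmetric])
  qed
  ultimately show ?case by blast
qed

lemma engine:
  fixes P :: "nat \<Rightarrow> (nat list \<Rightarrow> 'k::field) set"
  assumes sub: "\<And>k. subsp (P k)"
    and fin: "\<And>k. \<forall>c\<in>P k. finite (supp c) \<and> supp c \<subseteq> K"
    and lenK: "\<forall>d\<in>K. length d = L"
    and mono: "\<And>k. P k \<subseteq> P (Suc k)"
    and clos: "\<And>k d d'. d \<in> LT (P k) \<Longrightarrow> d' \<in> K \<Longrightarrow> list_all2 (\<le>) d d' \<Longrightarrow> d' \<in> LT (P k)"
  shows "\<exists>k. P (Suc k) \<subseteq> P k"
proof (rule ccontr)
  assume "\<not> ?thesis"
  then have ns: "\<not> P (Suc k) \<subseteq> P k" for k by blast
  have "\<not> LT (P (Suc k)) \<subseteq> LT (P k)" for k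
    using reduce[OF sub sub mono] fin ns by blast
  then have "\<forall>k. \<exists>d. d \<in> LT (P (Suc k)) \<and> d \<notin> LT (P k)" by blast
  from choice[OF this] obtain x where x0: "\<forall>k. x k \<in> LT (P (Suc k)) \<and> x k \<notin> LT (P k)" by blast
  then have x: "\<And>k. x k \<in> LT (P (Suc k)) \<and> x k \<notin> LT (P k)" by blast
  have LTK: "LT (P k) \<subseteq> K" for k
  proof
    fix d assume "d \<in> LT (P k)"
    then obtain c where "c \<in> P k" "c \<noteq> (\<lambda>_. 0)" "d = lead c" unfolding LT_def by blast
    then show "d \<in> K" using lead_in fin by blast
  qed
  have Pmono: "a \<le> b \<Longrightarrow> P a \<subseteq> P b" for a b
    using mono by (rule lift_Suc_mono_le)
  have LTmono: "a \<le> b \<Longrightarrow> LT (P a) \<subseteq> LT (P b)" for a b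
    using Pmono unfolding LT_def by blast
  have "\<forall>k. length (x k) = L" using x LTK lenK by blast
  from dickson[OF this] obtain \<sigma> :: "nat \<Rightarrow> nat" where sm: "strict_mono \<sigma>"
    and le: "\<forall>a b. a \<le> b \<longrightarrow> list_all2 (\<le>) (x (\<sigma> a)) (x (\<sigma> b))" by blast
  define a where "a = \<sigma> 0"
  define b where "b = \<sigma> 1"
  have ab: "a < b" unfolding a_def b_def using sm by (simp add: strict_mono_def)
  have "x a \<in> LT (P b)" using x[of a] LTmono[of "Suc a" b] ab by auto
  moreover have "x b \<in> K" using x LTK by blast
  moreover have "list_all2 (\<le>) (x a) (x b)" using le unfolding a_def b_def by simp
  ultimately have "x b \<in> LT (P b)" using clos by blast
  then show False using x by blast
qed


definition gg :: "nat \<Rightarrow> nat \<Rightarrow> 'k::field mla" where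
  "gg r k = abs_mla (if k < r then Gen k else Var (k - r))"

fun ads :: "nat \<Rightarrow> nat \<Rightarrow> nat list \<Rightarrow> 'k::field mla \<Rightarrow> 'k mla" where
  "ads r k [] z = z"
| "ads r k (a # es) z = (br (gg r k) ^^ a) (ads r (Suc k) es z)"

definition linkey :: "nat \<Rightarrow> nat \<Rightarrow> nat list" where
  "linkey m i = [1, 0, i, m - i, 0, m] @ replicate m 0"
definition brkey :: "nat \<Rightarrow> nat \<Rightarrow> nat \<Rightarrow> nat list \<Rightarrow> nat list" where
  "brkey m i j e = [0, 1, i, m - i, j, m - j] @ e"
definition Keys :: "nat \<Rightarrow> nat list set" where
  "Keys m = {linkey m i | i. i < m} \<union> {brkey m i j e | i j e. i < m \<and> j < m \<and> length e = m}"

definition val :: "nat \<Rightarrow> nat list \<Rightarrow> 'k::field mla" where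
  "val r d = (if d ! 0 = 1 then gg r (d ! 2) else ads r 0 (drop 6 d) (br (gg r (d ! 2)) (gg r (d ! 4))))"

definition phi :: "nat \<Rightarrow> (nat list \<Rightarrow> 'k::field) \<Rightarrow> 'k mla" where
  "phi r c = (\<Sum>d\<in>supp c. sc (c d) (val r d))"

definition valid :: "nat \<Rightarrow> (nat list \<Rightarrow> 'k::field) \<Rightarrow> bool" where
  "valid m c \<longleftrightarrow> finite (supp c) \<and> supp c \<subseteq> Keys m"

definition Span :: "nat \<Rightarrow> nat \<Rightarrow> 'k::field mla set" where
  "Span r m = {phi r c | c. valid m c}"

definition Mp :: "'k::field mla \<Rightarrow> bool" where "Mp z \<longleftrightarrow> (\<exists>u v. z = br u v)"

lemma val_lin[simp]: "val r (linkey m i) = gg r i"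
  unfolding val_def linkey_def by simp
lemma val_br[simp]: "val r (brkey m i j e) = ads r 0 e (br (gg r i) (gg r j))"
  unfolding val_def brkey_def by simp

lemma phi_sup: "finite A \<Longrightarrow> supp c \<subseteq> A \<Longrightarrow> phi r c = (\<Sum>d\<in>A. sc (c d) (val r d))"
  unfolding phi_def
  by (rule sum.mono_neutral_left) (auto simp: supp_def)

lemma phi_lin:
  assumes "finite (supp c)" "finite (supp b)"
  shows "phi r (\<lambda>x. c x + a * b x) = phi r c + sc a (phi r b)"
proof -
  let ?A = "supp c \<union> supp b"
  have f: "finite ?A" using assms by simp
  have s: "supp (\<lambda>x. c x + a * b x) \<subseteq> ?A" unfolding supp_def by auto
  have "phi r (\<lambda>x. c x + a * b x) = (\<Sum>d\<in>?A. sc (c d + a * b d) (val r d))"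
    using phi_sup[OF f s] by simp
  also have "\<dots> = (\<Sum>d\<in>?A. sc (c d) (val r d)) + sc a (\<Sum>d\<in>?A. sc (b d) (val r d))"
    by (simp add: mla.scale_left_distrib mla.scale_sum_right mla.scale_scale sum.distrib)
  also have "\<dots> = phi r c + sc a (phi r b)"
    using phi_sup[OF f, of c r] phi_sup[OF f, of b r] by auto
  finally show ?thesis .
qed

lemma phi_zero[simp]: "phi r (\<lambda>_. 0) = 0"
  unfolding phi_def supp_def by simp

lemma valid_zero: "valid m (\<lambda>_. 0)"
  unfolding valid_def supp_def by simp

lemma valid_lin: "valid m c \<Longrightarrow> valid m b \<Longrightarrow> valid m (\<lambda>x. c x + a * b x)"
proof -
  assume "valid m c" "valid m b"
  moreover have "supp (\<lambda>x. c x + a * b x) \<subseteq> supp c \<union> supp b" unfolding supp_def by auto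
  ultimately show ?thesis unfolding valid_def using finite_subset by blast
qed

lemma Span_zero: "0 \<in> Span r m"
proof -
  have "phi r (\<lambda>_. 0) \<in> Span r m" unfolding Span_def using valid_zero by blast
  then show ?thesis by simp
qed

lemma Span_lin: "x \<in> Span r m \<Longrightarrow> y \<in> Span r m \<Longrightarrow> x + sc a y \<in> Span r m"
proof -
  assume "x \<in> Span r m" "y \<in> Span r m"
  then obtain c b where c: "valid m c" "x = phi r c" and b: "valid m b" "y = phi r b"
    unfolding Span_def by blast
  then have "x + sc a y = phi r (\<lambda>z. c z + a * b z)" using phi_lin[of c b r a] unfolding valid_def by simp
  moreover have "valid m (\<lambda>z. c z + a * b z)" using valid_lin c b by blast
  ultimately show ?thesis unfolding Span_def by blast
qed

lemma Span_add: fixes x y :: "'k::field mla" shows "x \<in> Span r m \<Longrightarrow> y \<in> Span r m \<Longrightarrow> x + y \<in> Span r m"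
  using Span_lin[of x r m y 1] by simp

lemma Span_sc: fixes y :: "'k::field mla" shows "y \<in> Span r m \<Longrightarrow> sc a y \<in> Span r m"
  using Span_lin[OF Span_zero, of y r m a] by simp

lemma Span_neg: fixes y :: "'k::field mla" shows "y \<in> Span r m \<Longrightarrow> - y \<in> Span r m"
  using Span_sc[of y r m "-1"] by (simp add: mla.scale_minus_left)

lemma Span_sum: "finite A \<Longrightarrow> (\<And>a. a \<in> A \<Longrightarrow> f a \<in> Span r m) \<Longrightarrow> sum f A \<in> Span r m"
  by (induction A rule: finite_induct) (auto intro: Span_add Span_zero)

lemma supp_ind: "supp (\<lambda>x. if x = d then (1::'k::field) else 0) = {d}"
  unfolding supp_def by auto

lemma val_Span: "d \<in> Keys m \<Longrightarrow> val r d \<in> (Span r m :: 'k::field mla set)"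
proof -
  assume d: "d \<in> Keys m"
  define c where "c = (\<lambda>x. if x = d then (1::'k) else 0)"
  have sc: "supp c = {d}" unfolding c_def by (rule supp_ind)
  have v: "valid m c" unfolding valid_def sc using d by simp
  have "phi r c = (\<Sum>x\<in>{d}. sc (c x) (val r x))" unfolding phi_def sc ..
  also have "\<dots> = val r d" unfolding c_def by simp
  finally have "val r d = phi r c" by simp
  then show ?thesis unfolding Span_def using v by blast
qed

lemma Mp_br[simp]: "Mp (br x y)" unfolding Mp_def by blast

lemma Mp_pow: "Mp z \<Longrightarrow> Mp ((br x ^^ a) z)"
  by (induction a) auto

lemma Mp_ads: "Mp z \<Longrightarrow> Mp (ads r k es z)"
  by (induction es arbitrary: k) (auto intro: Mp_pow)

lemma comm_Mp: "Mp w \<Longrightarrow> br x (br y w) = br y (br x w)"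
  unfolding Mp_def using br_comm by blast

lemma pow_comm: "Mp w \<Longrightarrow> (br y ^^ a) (br x w) = br x ((br y ^^ a) w)"
proof (induction a)
  case 0 then show ?case by simp
next
  case (Suc a)
  have "(br y ^^ Suc a) (br x w) = br y (br x ((br y ^^ a) w))" using Suc by simp
  also have "\<dots> = br x (br y ((br y ^^ a) w))" using comm_Mp[OF Mp_pow[OF Suc.prems]] by simp
  finally show ?case by simp
qed

lemma ads_comm: "Mp w \<Longrightarrow> ads r k es (br x w) = br x (ads r k es w)"
  by (induction es arbitrary: k) (auto simp: pow_comm Mp_ads)

lemma ads_zero: "ads r k (replicate n 0) z = z"
  by (induction n arbitrary: k) auto

lemma ads_inc:
  assumes "Mp z"
  shows "k \<le> l \<Longrightarrow> l < k + length es \<Longrightarrow>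
    ads r k (es[l - k := Suc (es ! (l - k))]) z = br (gg r l) (ads r k es z)"
proof (induction es arbitrary: k)
  case Nil then show ?case by simp
next
  case (Cons a es)
  show ?case
  proof (cases "l = k")
    case True
    then show ?thesis by simp
  next
    case False
    then have lk: "l - k = Suc (l - Suc k)" using Cons.prems by simp
    have IH: "ads r (Suc k) (es[l - Suc k := Suc (es ! (l - Suc k))]) z = br (gg r l) (ads r (Suc k) es z)"
      using Cons.IH[of "Suc k"] Cons.prems False by simp
    have "ads r k ((a # es)[l - k := Suc ((a # es) ! (l - k))]) z
        = (br (gg r k) ^^ a) (br (gg r l) (ads r (Suc k) es z))" using lk IH by simp
    also have "\<dots> = br (gg r l) ((br (gg r k) ^^ a) (ads r (Suc k) es z))"
      using pow_comm Mp_ads assms by blast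
    finally show ?thesis by simp
  qed
qed

lemma val_br_inc:
  assumes "l < length e"
  shows "val r (brkey m i j (e[l := Suc (e ! l)])) = br (gg r l) (val r (brkey m i j e))"
  using ads_inc[of "br (gg r i) (gg r j)" 0 l e r] assms by simp


lemma len_keys: "d \<in> Keys m \<Longrightarrow> length d = m + 6"
  unfolding Keys_def linkey_def brkey_def by auto

lemma br_lt_lin: "length e = m \<Longrightarrow> brkey m i j e < linkey m i'"
  unfolding brkey_def linkey_def by (simp add: Cons_less_Cons)

lemma inc_mono: "(x::nat list) < y \<Longrightarrow> x[q := Suc (x ! q)] < y[q := Suc (y ! q)]"
proof (induction x arbitrary: y q)
  case Nil
  then obtain b ys where "y = b # ys" by (cases y) auto
  then show ?case by (cases q) auto
next
  case (Cons a x)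
  then obtain b ys where y: "y = b # ys" by (cases y) auto
  with Cons.prems have h: "length x < length ys \<or> length x = length ys \<and> (a < b \<or> a = b \<and> x < ys)"
    by (simp add: Cons_less_Cons)
  show ?case
  proof (cases q)
    case 0 then show ?thesis using h y by (auto simp: Cons_less_Cons)
  next
    case (Suc q')
    have "x < ys \<Longrightarrow> x[q' := Suc (x ! q')] < ys[q' := Suc (ys ! q')]" using Cons.IH by blast
    then show ?thesis using h y Suc by (auto simp: Cons_less_Cons)
  qed
qed

lemma inc_mono_le: "mono (\<lambda>x::nat list. x[q := Suc (x ! q)])"
  unfolding mono_def using inc_mono by (metis order_le_less)

lemma brkey_inc: "l < length e \<Longrightarrow>
  (brkey m i j e)[6 + l := Suc ((brkey m i j e) ! (6 + l))] = brkey m i j (e[l := Suc (e ! l)])"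
  unfolding brkey_def by (simp add: list_update_append nth_append)

lemma brkey_Keys: "i < m \<Longrightarrow> j < m \<Longrightarrow> length e = m \<Longrightarrow> brkey m i j e \<in> Keys m"
  unfolding Keys_def by blast

lemma Mp_val_br: "Mp (val r (brkey m i j e))"
  by (simp add: Mp_ads)

lemma br_vals:
  assumes d: "d \<in> Keys m" and d': "d' \<in> Keys m"
  shows "br (val r d) (val r d') \<in> (Span r m :: 'k::field mla set)"
proof -
  have lin: "br (gg r i) (val r d') \<in> (Span r m :: 'k mla set)" if i: "i < m" for i
  proof -
    from d' consider (L) j where "j < m" "d' = linkey m j"
      | (B) a b e where "a < m" "b < m" "length e = m" "d' = brkey m a b e"
      unfolding Keys_def by blast
    then show ?thesis
    proof cases
      case L
      have eq: "br (gg r i) (val r d') = (val r (brkey m i j (replicate m 0)) :: 'k mla)"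
        using L by (simp add: ads_zero)
      show ?thesis unfolding eq by (rule val_Span[OF brkey_Keys]) (simp_all add: i L)
    next
      case B
      have eq: "br (gg r i) (val r d') = (val r (brkey m a b (e[i := Suc (e ! i)])) :: 'k mla)"
        unfolding B(4) by (rule val_br_inc[symmetric]) (simp add: B i)
      show ?thesis unfolding eq by (rule val_Span[OF brkey_Keys]) (simp_all add: B)
    qed
  qed
  from d consider (L) i where "i < m" "d = linkey m i"
    | (B) a b e where "d = brkey m a b e"
    unfolding Keys_def by blast
  then show ?thesis
  proof cases
    case L then show ?thesis using lin by simp
  next
    case B
    from d' consider (L') j where "j < m" "d' = linkey m j"
      | (B') a' b' e' where "d' = brkey m a' b' e'"
      unfolding Keys_def by blast
    then show ?thesis
    proof cases
      case L'
      have "br (val r d) (val r d') = - (br (gg r j) (val r d) :: 'k mla)" using L' br_anti by simp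
      moreover have "br (gg r j) (val r d) \<in> (Span r m :: 'k mla set)"
      proof -
        show ?thesis
        proof -
          from d consider (L2) i where "i < m" "d = linkey m i"
            | (B2) a b e where "a < m" "b < m" "length e = m" "d = brkey m a b e"
            unfolding Keys_def by blast
          then show ?thesis
          proof cases
            case L2 then show ?thesis using B by (simp add: linkey_def brkey_def)
          next
            case B2
            have eq: "br (gg r j) (val r d) = (val r (brkey m a b (e[j := Suc (e ! j)])) :: 'k mla)"
              unfolding B2(4) by (rule val_br_inc[symmetric]) (simp add: B2 L'(1))
            show ?thesis unfolding eq by (rule val_Span[OF brkey_Keys]) (simp_all add: B2)
          qed
        qed
      qed
      ultimately show ?thesis using Span_neg by simp
    next
      case B'
      have "Mp (val r d :: 'k mla)" "Mp (val r d' :: 'k mla)" using B B' Mp_val_br by simp_all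
      then obtain u v u' v' where "val r d = (br u v :: 'k mla)" "val r d' = (br u' v' :: 'k mla)" unfolding Mp_def by blast
      then show ?thesis by (simp add: metab Span_zero)
    qed
  qed
qed

lemma Span_br:
  assumes "x \<in> Span r m" "y \<in> Span r m"
  shows "br x y \<in> (Span r m :: 'k::field mla set)"
proof -
  obtain c b where c: "valid m c" "x = phi r c" and b: "valid m b" "y = phi r b"
    using assms unfolding Span_def by blast
  have "br x y = (\<Sum>d'\<in>supp b. sc (b d') (\<Sum>d\<in>supp c. sc (c d) (br (val r d) (val r d'))))"
    unfolding c b phi_def by (simp add: br_sum_left br_sum_right br_sc_left br_sc_right)
  also have "\<dots> \<in> Span r m"
    using c b unfolding valid_def
    by (intro Span_sum Span_sc br_vals) auto
  finally show ?thesis .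
qed

inductive_set TQ :: "nat \<Rightarrow> nat \<Rightarrow> 'k::field mla set" for r m where
  gen: "k < m \<Longrightarrow> gg r k \<in> TQ r m"
| zero: "0 \<in> TQ r m"
| add: "x \<in> TQ r m \<Longrightarrow> y \<in> TQ r m \<Longrightarrow> x + y \<in> TQ r m"
| scl: "x \<in> TQ r m \<Longrightarrow> sc a x \<in> TQ r m"
| brk: "x \<in> TQ r m \<Longrightarrow> y \<in> TQ r m \<Longrightarrow> br x y \<in> TQ r m"

lemma TQ_Span: "x \<in> TQ r m \<Longrightarrow> x \<in> Span r m"
proof (induction rule: TQ.induct)
  case (gen k)
  have "linkey m k \<in> Keys m" using gen unfolding Keys_def by blast
  then show ?case using val_Span[of "linkey m k" m r] by simp
qed (auto intro: Span_zero Span_add Span_sc Span_br)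

lemma FrX_TQ:
  fixes t :: "'k::field lterm"
  assumes "FrX_elem r n t"
  shows "abs_mla t \<in> TQ r (r + n)"
  using assms
proof (induction t)
  case (Gen i)
  then have "i < r" unfolding FrX_elem_def by simp
  then have "(abs_mla (Gen i) :: 'k mla) = gg r i" unfolding gg_def by simp
  then show ?case using \<open>i < r\<close> by (metis TQ.gen trans_less_add1)
next
  case (Var j)
  then have "j < n" unfolding FrX_elem_def by simp
  then have "(abs_mla (Var j) :: 'k mla) = gg r (r + j)" unfolding gg_def by simp
  then show ?case using \<open>j < n\<close> by (metis TQ.gen add_less_cancel_left)
next
  case LZero
  then show ?case using TQ.zero by (metis zero_mla.abs_eq)
next
  case (LAdd a b)
  then have "abs_mla a \<in> TQ r (r+n)" "abs_mla b \<in> TQ r (r+n)" unfolding FrX_elem_def by auto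
  then show ?case using TQ.add by (metis plus_mla.abs_eq)
next
  case (LSmul c a)
  then have "abs_mla a \<in> TQ r (r+n)" unfolding FrX_elem_def by auto
  then show ?case using TQ.scl by (metis sc.abs_eq)
next
  case (LBr a b)
  then have "abs_mla a \<in> TQ r (r+n)" "abs_mla b \<in> TQ r (r+n)" unfolding FrX_elem_def by auto
  then show ?case using TQ.brk by (metis br.abs_eq)
qed


inductive_set Idl :: "nat \<Rightarrow> nat \<Rightarrow> 'k::field mla set \<Rightarrow> 'k mla set" for r m F where
  base: "x \<in> F \<Longrightarrow> x \<in> Idl r m F"
| zero: "0 \<in> Idl r m F"
| add: "x \<in> Idl r m F \<Longrightarrow> y \<in> Idl r m F \<Longrightarrow> x + y \<in> Idl r m F"
| scl: "x \<in> Idl r m F \<Longrightarrow> sc a x \<in> Idl r m F"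
| brk: "x \<in> Idl r m F \<Longrightarrow> y \<in> TQ r m \<Longrightarrow> br y x \<in> Idl r m F"

lemma Id_mono: "x \<in> Idl r m F \<Longrightarrow> F \<subseteq> G \<Longrightarrow> x \<in> Idl r m G"
  by (induction rule: Idl.induct) (auto intro: Idl.intros)

lemma Id_ev: "x \<in> Idl r m F \<Longrightarrow> (\<forall>y\<in>F. ev p y = 0) \<Longrightarrow> ev p x = 0"
  by (induction rule: Idl.induct) (auto simp: mla.scale_zero_right)

definition shiftc :: "nat \<Rightarrow> (nat list \<Rightarrow> 'k::field) \<Rightarrow> nat list \<Rightarrow> 'k" where
  "shiftc l c d = (if 6 + l < length d \<and> 0 < d ! (6 + l) then c (d[6 + l := d ! (6 + l) - 1]) else 0)"

definition inck :: "nat \<Rightarrow> nat list \<Rightarrow> nat list" where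
  "inck l d = d[6 + l := Suc (d ! (6 + l))]"

definition BrK :: "nat \<Rightarrow> nat list set" where
  "BrK m = {brkey m i j e | i j e. i < m \<and> j < m \<and> length e = m}"

lemma BrK_len: "d \<in> BrK m \<Longrightarrow> length d = m + 6"
  unfolding BrK_def brkey_def by auto

lemma BrK_Keys: "BrK m \<subseteq> Keys m"
  unfolding BrK_def Keys_def by blast

lemma shift_inck: "6 + l < length d \<Longrightarrow> shiftc l c (inck l d) = c d"
  unfolding shiftc_def inck_def by simp

lemma inck_dec: "6 + l < length d \<Longrightarrow> 0 < d ! (6 + l) \<Longrightarrow> inck l (d[6 + l := d ! (6 + l) - 1]) = d"
  unfolding inck_def by simp

lemma inck_BrK: "d \<in> BrK m \<Longrightarrow> l < m \<Longrightarrow> inck l d \<in> BrK m"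
proof -
  assume d: "d \<in> BrK m" and l: "l < m"
  then obtain i j e where ije: "i < m" "j < m" "length e = m" "d = brkey m i j e" unfolding BrK_def by blast
  have "inck l d = brkey m i j (e[l := Suc (e ! l)])"
    unfolding inck_def ije(4) by (rule brkey_inc) (use ije l in simp)
  moreover have "length (e[l := Suc (e ! l)]) = m" using ije by simp
  ultimately show ?thesis unfolding BrK_def using ije by blast
qed

lemma supp_shift:
  assumes s: "supp c \<subseteq> BrK m" and l: "l < m"
  shows "supp (shiftc l c) = inck l ` supp c"
proof
  show "supp (shiftc l c) \<subseteq> inck l ` supp c"
  proof
    fix d assume "d \<in> supp (shiftc l c)"
    then have h: "6 + l < length d" "0 < d ! (6 + l)" "c (d[6 + l := d ! (6 + l) - 1]) \<noteq> 0"
      unfolding supp_def shiftc_def by (auto split: if_splits)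
    then have "d[6 + l := d ! (6 + l) - 1] \<in> supp c" unfolding supp_def by simp
    moreover have "d = inck l (d[6 + l := d ! (6 + l) - 1])" using inck_dec h by simp
    ultimately show "d \<in> inck l ` supp c" by blast
  qed
next
  show "inck l ` supp c \<subseteq> supp (shiftc l c)"
  proof
    fix d assume "d \<in> inck l ` supp c"
    then obtain d0 where d0: "d0 \<in> supp c" "d = inck l d0" by blast
    have "6 + l < length d0" using d0 s BrK_len l by fastforce
    then have "shiftc l c d = c d0" using shift_inck d0 by simp
    then show "d \<in> supp (shiftc l c)" using d0 unfolding supp_def by simp
  qed
qed

lemma dec_inck: "6 + l < length d \<Longrightarrow> (inck l d)[6 + l := (inck l d) ! (6 + l) - 1] = d"
  unfolding inck_def by simp

lemma inj_inck: "inj_on (inck l) {d. 6 + l < length d}"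
proof (rule inj_onI)
  fix x y assume x: "x \<in> {d. 6 + l < length d}" and y: "y \<in> {d. 6 + l < length d}"
    and e: "inck l x = inck l y"
  have "x = (inck l x)[6 + l := (inck l x) ! (6 + l) - 1]" using dec_inck x by simp
  also have "\<dots> = (inck l y)[6 + l := (inck l y) ! (6 + l) - 1]" using e by simp
  also have "\<dots> = y" using dec_inck y by simp
  finally show "x = y" .
qed

lemma val_inck: "d \<in> BrK m \<Longrightarrow> l < m \<Longrightarrow> val r (inck l d) = br (gg r l) (val r d)"
proof -
  assume d: "d \<in> BrK m" and l: "l < m"
  then obtain i j e where "i < m" "j < m" "length e = m" "d = brkey m i j e" unfolding BrK_def by blast
  then show ?thesis unfolding inck_def using brkey_inc[of l e m i j] val_br_inc[of l e r m i j] l by simp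
qed

lemma phi_shift:
  assumes v: "valid m c" and s: "supp c \<subseteq> BrK m" and l: "l < m"
  shows "phi r (shiftc l c) = br (gg r l) (phi r c)"
proof -
  have "supp c \<subseteq> {d. 6 + l < length d}" using s BrK_len l by fastforce
  then have inj: "inj_on (inck l) (supp c)" by (rule inj_on_subset[OF inj_inck])
  have "phi r (shiftc l c) = (\<Sum>d\<in>inck l ` supp c. sc (shiftc l c d) (val r d))"
    unfolding phi_def supp_shift[OF s l] ..
  also have "\<dots> = (\<Sum>d\<in>supp c. sc (shiftc l c (inck l d)) (val r (inck l d)))"
    using sum.reindex[OF inj] by simp
  also have "\<dots> = (\<Sum>d\<in>supp c. sc (c d) (br (gg r l) (val r d)))"
  proof (rule sum.cong)
    fix d assume "d \<in> supp c"
    then have "d \<in> BrK m" using s by blast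
    then show "sc (shiftc l c (inck l d)) (val r (inck l d)) = sc (c d) (br (gg r l) (val r d))"
    proof -
      have "6 + l < length d" using BrK_len[OF \<open>d \<in> BrK m\<close>] l by simp
      then show ?thesis by (simp add: shift_inck val_inck[OF \<open>d \<in> BrK m\<close> l])
    qed
  qed simp
  also have "\<dots> = br (gg r l) (phi r c)"
    unfolding phi_def by (simp add: br_sum_right br_sc_right)
  finally show ?thesis .
qed

lemma valid_shift:
  assumes v: "valid m c" and s: "supp c \<subseteq> BrK m" and l: "l < m"
  shows "valid m (shiftc l c)"
proof -
  have "inck l ` supp c \<subseteq> BrK m" using s inck_BrK l by blast
  then show ?thesis using v BrK_Keys unfolding valid_def supp_shift[OF s l] by auto
qed

lemma lead_shift:
  assumes v: "valid m c" and s: "supp c \<subseteq> BrK m" and l: "l < m" and c0: "c \<noteq> (\<lambda>_. 0)"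
  shows "lead (shiftc l c) = inck l (lead c)"
proof -
  have "inck l (Max (supp c)) = Max (inck l ` supp c)"
    unfolding inck_def
    by (rule mono_Max_commute[OF inc_mono_le]) (use v supp_ne[OF c0] in \<open>auto simp: valid_def\<close>)
  then show ?thesis unfolding lead_def supp_shift[OF s l] by simp
qed


lemma LT_E:
  assumes "d \<in> LT P"
  obtains c where "c \<in> P" "c \<noteq> (\<lambda>_. 0)" "lead c = d"
  using assms unfolding LT_def by (auto simp del: )

lemma LT_I: "c \<in> P \<Longrightarrow> c \<noteq> (\<lambda>_. 0) \<Longrightarrow> lead c = d \<Longrightarrow> d \<in> LT P"
  unfolding LT_def by blast

lemma supp_BrK:
  assumes v: "valid m c" and c0: "c \<noteq> (\<lambda>_. 0)" and ld: "lead c = brkey m i j e" and le: "length e = m"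
  shows "supp c \<subseteq> BrK m"
proof
  fix d assume d: "d \<in> supp c"
  have "d \<le> lead c" using lead_ge v d unfolding valid_def by blast
  moreover have "d \<in> Keys m" using v d unfolding valid_def by blast
  ultimately show "d \<in> BrK m"
    unfolding Keys_def BrK_def using br_lt_lin[OF le, of i j] ld
    by (auto simp: not_le[symmetric])
qed

lemma step_LT:
  fixes F :: "'k::field mla set" and r m :: nat
  defines "P \<equiv> {c. valid m c \<and> phi r c \<in> Idl r m F}"
  assumes d: "brkey m i j e \<in> LT P" and l: "l < m" and le: "length e = m"
  shows "brkey m i j (e[l := Suc (e ! l)]) \<in> LT P"
proof -
  obtain c where cP: "c \<in> P" and c0: "c \<noteq> (\<lambda>_. 0)" and ld: "lead c = brkey m i j e"
    using d by (rule LT_E)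
  have v: "valid m c" using cP unfolding P_def by blast
  have s: "supp c \<subseteq> BrK m" using supp_BrK[OF v c0 ld le] .
  have "phi r (shiftc l c) = br (gg r l) (phi r c)" using phi_shift[OF v s l] .
  moreover have "br (gg r l) (phi r c) \<in> Idl r m F"
  proof (rule Idl.brk)
    show "phi r c \<in> Idl r m F" using cP unfolding P_def by simp
    show "gg r l \<in> TQ r m" by (rule TQ.gen[OF l])
  qed
  ultimately have "shiftc l c \<in> P" using valid_shift[OF v s l] unfolding P_def by simp
  moreover have "shiftc l c \<noteq> (\<lambda>_. 0)"
  proof
    assume "shiftc l c = (\<lambda>_. 0)"
    then have "supp (shiftc l c) = {}" unfolding supp_def by simp
    then show False using supp_shift[OF s l] supp_ne[OF c0] by simp
  qed
  moreover have "lead (shiftc l c) = brkey m i j (e[l := Suc (e ! l)])"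
  proof -
    have "inck l (brkey m i j e) = brkey m i j (e[l := Suc (e ! l)])"
      unfolding inck_def by (rule brkey_inc) (simp add: l le)
    then show ?thesis using lead_shift[OF v s l c0] ld by simp
  qed
  ultimately show ?thesis by (rule LT_I)
qed

lemma multi_LT:
  fixes F :: "'k::field mla set" and r m :: nat
  defines "P \<equiv> {c. valid m c \<and> phi r c \<in> Idl r m F}"
  assumes d: "brkey m i j e \<in> LT P" and le: "length e = m"
  shows "list_all2 (\<le>) e e' \<Longrightarrow> brkey m i j e' \<in> LT P"
proof (induction "sum_list e'" arbitrary: e' rule: less_induct)
  case less
  have len: "length e' = m" using less.prems le list_all2_lengthD by fastforce
  show ?case
  proof (cases "e' = e")
    case True then show ?thesis using d by simp
  next
    case False
    have "\<exists>l<m. e ! l < e' ! l"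
    proof (rule ccontr)
      assume "\<not> ?thesis"
      then have "\<forall>l<m. e' ! l \<le> e ! l" by auto
      moreover have "\<forall>l<m. e ! l \<le> e' ! l" using less.prems le by (simp add: list_all2_conv_all_nth)
      ultimately have "e' = e" using len le by (simp add: list_eq_iff_nth_eq) (meson le_antisym)
      then show False using False by simp
    qed
    then obtain l where l: "l < m" "e ! l < e' ! l" by blast
    define e'' where "e'' = e'[l := e' ! l - 1]"
    have len'': "length e'' = m" unfolding e''_def using len by simp
    have all'': "list_all2 (\<le>) e e''"
      using less.prems l le len unfolding e''_def
      by (auto simp: list_all2_conv_all_nth nth_list_update)
    have "e' ! l \<le> sum_list e'" using elem_le_sum_list[of l e'] l len by simp
    then have "sum_list e'' < sum_list e'"
      unfolding e''_def using sum_list_update[of l e'] l len by simp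
    then have "brkey m i j e'' \<in> LT P" using less.hyps all'' unfolding P_def by blast
    then have "brkey m i j (e''[l := Suc (e'' ! l)]) \<in> LT P"
      unfolding P_def by (rule step_LT) (use l len'' in auto)
    moreover have "e''[l := Suc (e'' ! l)] = e'" unfolding e''_def using l len by auto
    ultimately show ?thesis by simp
  qed
qed

lemma clos_LT:
  fixes F :: "'k::field mla set" and r m :: nat
  defines "P \<equiv> {c. valid m c \<and> phi r c \<in> Idl r m F}"
  assumes d: "d \<in> LT P" and d': "d' \<in> Keys m" and le: "list_all2 (\<le>) d d'"
  shows "d' \<in> LT P"
proof -
  obtain c where cP: "c \<in> P" and c0: "c \<noteq> (\<lambda>_. 0)" and ld: "lead c = d"
    using d by (rule LT_E)
  have "d \<in> Keys m" using cP c0 ld lead_in unfolding P_def valid_def by blast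
  then consider (L) i where "i < m" "d = linkey m i"
    | (B) i j e where "i < m" "j < m" "length e = m" "d = brkey m i j e"
    unfolding Keys_def by blast
  then show ?thesis
  proof cases
    case L
    from d' consider (L') i' where "i' < m" "d' = linkey m i'"
      | (B') i' j' e' where "i' < m" "j' < m" "length e' = m" "d' = brkey m i' j' e'"
      unfolding Keys_def by blast
    then show ?thesis
    proof cases
      case L'
      have len: "length d = m + 6" using L by (simp add: linkey_def)
      have "d ! 2 \<le> d' ! 2" by (rule list_all2_nthD[OF le]) (simp add: len)
      moreover have "d ! 3 \<le> d' ! 3" by (rule list_all2_nthD[OF le]) (simp add: len)
      ultimately have "i \<le> i'" "m - i \<le> m - i'" using L L' by (simp_all add: linkey_def)
      then have "i = i'" using L L' by linarith
      then show ?thesis using L L' d by simp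
    next
      case B'
      have len: "length d = m + 6" using L by (simp add: linkey_def)
      have "d ! 0 \<le> d' ! 0" by (rule list_all2_nthD[OF le]) (simp add: len)
      then show ?thesis using L B' by (simp add: linkey_def brkey_def)
    qed
  next
    case B
    from d' consider (L') i' where "i' < m" "d' = linkey m i'"
      | (B') i' j' e' where "i' < m" "j' < m" "length e' = m" "d' = brkey m i' j' e'"
      unfolding Keys_def by blast
    then show ?thesis
    proof cases
      case L'
      have len: "length d = m + 6" using B by (simp add: brkey_def)
      have "d ! 1 \<le> d' ! 1" by (rule list_all2_nthD[OF le]) (simp add: len)
      then show ?thesis using B L' by (simp add: linkey_def brkey_def)
    next
      case B'
      have h: "list_all2 (\<le>) [0, 1, i, m - i, j, m - j] [0, 1, i', m - i', j', m - j'] \<and> list_all2 (\<le>) e e'"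
        using le B B' unfolding brkey_def by (subst list_all2_append[symmetric]) simp_all
      then have "i = i'" "j = j'" using B B' by auto
      then show ?thesis using multi_LT[of m i j e r F e'] d B B' h unfolding P_def by simp
    qed
  qed
qed


theorem lemma2p4:
  fixes r n :: nat and S :: "'k::field lterm set"
  assumes "r > 0"
    and "\<forall>f\<in>S. FrX_elem r n f"
  shows "\<exists>S0. S0 \<subseteq> S \<and> finite S0 \<and> Vset r n S = Vset r n S0"
proof -
  define m where "m = r + n"
  have key: "\<exists>F. finite F \<and> F \<subseteq> S \<and> (abs_mla ` S :: 'k mla set) \<subseteq> Idl r m (abs_mla ` F)"
  proof (rule ccontr)
    assume nk: "\<not> ?thesis"
    have ex: "\<exists>s. s \<in> S \<and> (abs_mla s :: 'k mla) \<notin> Idl r m (abs_mla ` F)" if "finite F" "F \<subseteq> S" for F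
      using nk that by blast
    define pick where "pick F = (SOME s. s \<in> S \<and> (abs_mla s :: 'k mla) \<notin> Idl r m (abs_mla ` F))" for F
    have pick: "pick F \<in> S \<and> (abs_mla (pick F) :: 'k mla) \<notin> Idl r m (abs_mla ` F)"
      if "finite F" "F \<subseteq> S" for F
      unfolding pick_def using someI_ex[OF ex[OF that]] .
    define Fs where "Fs = rec_nat {} (\<lambda>k F. insert (pick F) F)"
    have Fs0: "Fs 0 = {}" unfolding Fs_def by simp
    have FsS: "Fs (Suc k) = insert (pick (Fs k)) (Fs k)" for k unfolding Fs_def by simp
    have fin: "finite (Fs k) \<and> Fs k \<subseteq> S" for k
    proof (induction k)
      case 0 then show ?case by (simp add: Fs0)
    next
      case (Suc k) then show ?case using pick[of "Fs k"] by (simp add: FsS)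
    qed
    define P where "P k = {c. valid m c \<and> phi r c \<in> Idl r m (abs_mla ` Fs k :: 'k mla set)}" for k
    have "\<exists>k. P (Suc k) \<subseteq> P k"
    proof (rule engine[where K = "Keys m" and L = "m + 6"])
      fix k
      show "subsp (P k)"
        unfolding subsp_def P_def
      proof (intro conjI ballI allI)
        show "(\<lambda>_. 0) \<in> {c. valid m c \<and> phi r c \<in> Idl r m (abs_mla ` Fs k)}"
          by (simp add: valid_zero Idl.zero)
        fix c b :: "nat list \<Rightarrow> 'k" and a :: 'k
        assume c: "c \<in> {c. valid m c \<and> phi r c \<in> Idl r m (abs_mla ` Fs k)}"
          and b: "b \<in> {c. valid m c \<and> phi r c \<in> Idl r m (abs_mla ` Fs k)}"
        have "phi r (\<lambda>x. c x + a * b x) = phi r c + sc a (phi r b)"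
          using c b by (simp add: phi_lin valid_def)
        moreover have "phi r c + sc a (phi r b) \<in> Idl r m (abs_mla ` Fs k)"
          using c b by (simp add: Idl.add Idl.scl)
        moreover have "valid m (\<lambda>x. c x + a * b x)" using c b by (simp add: valid_lin)
        ultimately show "(\<lambda>x. c x + a * b x) \<in> {c. valid m c \<and> phi r c \<in> Idl r m (abs_mla ` Fs k)}"
          by simp
      qed
      show "\<forall>c\<in>P k. finite (supp c) \<and> supp c \<subseteq> Keys m"
        unfolding P_def valid_def by blast
      show "P k \<subseteq> P (Suc k)"
      proof
        fix c assume "c \<in> P k"
        then have v: "valid m c" and i: "phi r c \<in> Idl r m (abs_mla ` Fs k)" unfolding P_def by auto
        have "abs_mla ` Fs k \<subseteq> (abs_mla ` Fs (Suc k) :: 'k mla set)" unfolding FsS by blast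
        then have "phi r c \<in> Idl r m (abs_mla ` Fs (Suc k))" using Id_mono[OF i] by blast
        then show "c \<in> P (Suc k)" unfolding P_def using v by simp
      qed
      show "d' \<in> LT (P k)" if "d \<in> LT (P k)" "d' \<in> Keys m" "list_all2 (\<le>) d d'" for d d'
        using clos_LT[of d m r "abs_mla ` Fs k" d'] that unfolding P_def by simp
    next
      show "\<forall>d\<in>Keys m. length d = m + 6" using len_keys by blast
    qed
    then obtain k where k: "P (Suc k) \<subseteq> P k" by blast
    define s where "s = pick (Fs k)"
    have s: "s \<in> S" "(abs_mla s :: 'k mla) \<notin> Idl r m (abs_mla ` Fs k)"
      using pick[of "Fs k"] fin s_def by auto
    have "(abs_mla s :: 'k mla) \<in> TQ r m" using FrX_TQ assms(2) s(1) m_def by blast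
    then have "(abs_mla s :: 'k mla) \<in> Span r m" by (rule TQ_Span)
    then obtain c where c: "valid m c" "abs_mla s = phi r c" unfolding Span_def by blast
    have "abs_mla s \<in> Idl r m (abs_mla ` Fs (Suc k) :: 'k mla set)"
      by (rule Idl.base) (simp add: FsS s_def)
    then have "c \<in> P (Suc k)" unfolding P_def using c by simp
    then have "c \<in> P k" using k by blast
    then show False using s c unfolding P_def by simp
  qed
  then obtain F where F: "finite F" "F \<subseteq> S" "(abs_mla ` S :: 'k mla set) \<subseteq> Idl r m (abs_mla ` F)"
    by blast
  have "Vset r n S = Vset r n F"
  proof
    show "Vset r n S \<subseteq> Vset r n F" using F(2) unfolding Vset_def by blast
  next
    show "Vset r n F \<subseteq> Vset r n S"
    proof
      fix p assume p: "p \<in> Vset r n F"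
      have z: "\<forall>y\<in>(abs_mla ` F :: 'k mla set). ev p y = 0"
      proof
        fix y assume "y \<in> (abs_mla ` F :: 'k mla set)"
        then obtain f where f: "f \<in> F" "y = abs_mla f" by blast
        then have "meq (subst p f) LZero" using p unfolding Vset_def by blast
        then show "ev p y = 0" using f by (simp add: ev.abs_eq zero_mla.abs_eq mla.abs_eq_iff)
      qed
      have "meq (subst p s) LZero" if "s \<in> S" for s
      proof -
        have "(abs_mla s :: 'k mla) \<in> Idl r m (abs_mla ` F)" using F(3) that by blast
        then have "ev p (abs_mla s :: 'k mla) = 0" using Id_ev z by blast
        then show ?thesis by (simp add: ev.abs_eq zero_mla.abs_eq mla.abs_eq_iff)
      qed
      then show "p \<in> Vset r n S" using p unfolding Vset_def by blast
    qed
  qed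
  then show ?thesis using F by blast
qed

end
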